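(* Let $Z\subset\mathbb{R}^d$ be a zonotope and let $Z_1=\lambda_1Z+x_1$ and $Z_2=\lambda_2Z+x_2$ ($\lambda_1,\lambda_2>0$) be homothets of $Z$ with $Z_1\cap Z_2\neq\emptyset$ and $\lambda_1\ge\lambda_2$. Then $Z_1$ contains at least one vertex of $Z_2$.
   Context: A zonotope is a centrally symmetric convex polytope all of whose faces are centrally symmetric. *)

theory Defs
  imports "HOL-Analysis.Analysis"
begin

definition centrally_symmetric :: "'a::real_vector set \<Rightarrow> bool" where
  "centrally_symmetric S \<longleftrightarrow> (\<exists>c. \<forall>x\<in>S. 2 *\<^sub>R c - x \<in> S)"

definition zonotope :: "'a::euclidean_space set \<Rightarrow> bool" where
  "zonotope Z \<longleftrightarrow> polytope Z \<and> centrally_symmetric Z \<and>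
     (\<forall>F. F face_of Z \<longrightarrow> centrally_symmetric F)"

definition homothet :: "real \<Rightarrow> 'a::real_vector \<Rightarrow> 'a set \<Rightarrow> 'a set" where
  "homothet l x Z = (\<lambda>z. l *\<^sub>R z + x) ` Z"

end

theory Submission
  imports Defs
begin

lemma key_aux:
  fixes S :: "'a::euclidean_space set"
  shows "nat (aff_dim S + 1) = n \<Longrightarrow> polytope S \<Longrightarrow> (\<forall>F. F face_of S \<longrightarrow> centrally_symmetric F)
    \<Longrightarrow> w \<in> S \<Longrightarrow> \<exists>v. v extreme_point_of S \<and> 2 *\<^sub>R w - v \<in> S"
proof (induction n arbitrary: S w rule: less_induct)
  case (less n S w)
  have cvx: "convex S" and cpt: "compact S" using less.prems polytope_imp_convex polytope_imp_compact by auto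
  have IH: "\<exists>v. v extreme_point_of S \<and> 2 *\<^sub>R b - v \<in> S" if bF: "b \<in> rel_frontier S" for b
  proof -
    obtain F where F: "F face_of S" "F \<noteq> S" "b \<in> F"
      using bF rel_frontier_of_polyhedron_alt[OF polytope_imp_polyhedron[OF less.prems(2)]] by auto
    have lt: "aff_dim F < aff_dim S" using face_of_aff_dim_lt[OF cvx F(1,2)] .
    have "aff_dim F \<ge> -1" by (simp add: aff_dim_geq)
    then have "nat (aff_dim F + 1) < n" using lt less.prems(1) by linarith
    moreover have "polytope F" using face_of_polytope_polytope less.prems(2) F(1) by blast
    moreover have "\<forall>G. G face_of F \<longrightarrow> centrally_symmetric G"
      using less.prems(3) F(1) face_of_trans by blast
    ultimately obtain v where "v extreme_point_of F" "2 *\<^sub>R b - v \<in> F"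
      using less.IH[OF _ refl] F(3) by blast
    then show ?thesis using extreme_point_of_face[OF F(1)] face_of_imp_subset[OF F(1)] by blast
  qed
  show ?case
  proof (cases "w \<in> rel_frontier S")
    case True
    then show ?thesis using IH by blast
  next
    case False
    then have wri: "w \<in> rel_interior S"
      using less.prems(4) closure_subset unfolding rel_frontier_def by blast
    have "S face_of S" using cvx by (simp add: face_of_refl)
    then obtain c where c: "\<And>x. x \<in> S \<Longrightarrow> 2 *\<^sub>R c - x \<in> S"
      using less.prems(3) unfolding centrally_symmetric_def by blast
    show ?thesis
    proof (cases "w = c")
      case True
      obtain v where v: "v extreme_point_of S"
        using extreme_point_exists_convex[OF cpt cvx] less.prems(4) by blast
      then have "v \<in> S" by (simp add: extreme_point_of_def)
      then show ?thesis using v c True by blast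
    next
      case False
      have "(1/2) *\<^sub>R w + (1/2) *\<^sub>R (2 *\<^sub>R c - w) \<in> S"
        by (rule convexD[OF cvx less.prems(4) c[OF less.prems(4)]]) auto
      then have cS: "c \<in> S" by (simp add: algebra_simps)
      have "2 *\<^sub>R w + (-1) *\<^sub>R c \<in> affine hull S"
        by (rule mem_affine[OF affine_affine_hull]) (use hull_inc[OF less.prems(4)] hull_inc[OF cS] in auto)
      then have "w + (w - c) \<in> affine hull S" by (simp add: algebra_simps scaleR_2)
      then obtain d where d: "0 < d" "w + d *\<^sub>R (w - c) \<in> rel_frontier S"
        using ray_to_rel_frontier[OF compact_imp_bounded[OF cpt] wri] False by (metis right_minus_eq)
      define b where "b = w + d *\<^sub>R (w - c)"
      obtain v where v: "v extreme_point_of S" "2 *\<^sub>R b - v \<in> S" using IH d(2) b_def by blast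
      have vS: "v \<in> S" using v(1) by (simp add: extreme_point_of_def)
      define t where "t = 1 / (1 + d)"
      have t: "0 \<le> t" "t \<le> 1" "t * (1 + d) = 1" using d(1) by (auto simp: t_def)
      have "(1 - t) *\<^sub>R (2 *\<^sub>R c - v) + t *\<^sub>R (2 *\<^sub>R b - v) \<in> S"
        using convexD[OF cvx c[OF vS] v(2), of "1 - t" t] t by auto
      moreover have "(1 - t) *\<^sub>R (2 *\<^sub>R c - v) + t *\<^sub>R (2 *\<^sub>R b - v)
          = 2 *\<^sub>R c - v + (2 * (t * (1 + d))) *\<^sub>R (w - c)"
        by (simp add: b_def algebra_simps)
      moreover have "2 *\<^sub>R c - v + (2 * (t * (1 + d))) *\<^sub>R (w - c) = 2 *\<^sub>R w - v"
        using t(3) by (simp add: algebra_simps)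
      ultimately show ?thesis using v(1) by metis
    qed
  qed
qed

lemma extreme_homothet:
  fixes Z :: "'a::euclidean_space set"
  assumes "l > 0" "v extreme_point_of Z"
  shows "(l *\<^sub>R v + x) extreme_point_of (homothet l x Z)"
  unfolding extreme_point_of_def homothet_def
proof (intro conjI ballI)
  show "l *\<^sub>R v + x \<in> (\<lambda>z. l *\<^sub>R z + x) ` Z" using assms(2) by (auto simp: extreme_point_of_def)
next
  fix a b assume "a \<in> (\<lambda>z. l *\<^sub>R z + x) ` Z" "b \<in> (\<lambda>z. l *\<^sub>R z + x) ` Z"
  then obtain a' b' where ab: "a' \<in> Z" "b' \<in> Z" "a = l *\<^sub>R a' + x" "b = l *\<^sub>R b' + x" by auto
  show "l *\<^sub>R v + x \<notin> open_segment a b"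
  proof
    assume "l *\<^sub>R v + x \<in> open_segment a b"
    then obtain u where u: "a \<noteq> b" "0 < u" "u < 1" "l *\<^sub>R v + x = (1 - u) *\<^sub>R a + u *\<^sub>R b"
      by (auto simp: in_segment)
    have "l *\<^sub>R v + x = l *\<^sub>R ((1 - u) *\<^sub>R a' + u *\<^sub>R b') + x"
      using u(4) ab by (simp add: algebra_simps)
    then have "v = (1 - u) *\<^sub>R a' + u *\<^sub>R b'" using assms(1) by simp
    moreover have "a' \<noteq> b'" using u(1) ab by auto
    ultimately have "v \<in> open_segment a' b'" using u by (auto simp: in_segment)
    then show False using assms(2) ab(1,2) by (auto simp: extreme_point_of_def)
  qed
qed

theorem mainTheorem19:
  fixes Z :: "'a::euclidean_space set" and x1 x2 :: 'a and l1 l2 :: real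
  assumes "zonotope Z"
    and "l1 > 0" and "l2 > 0"
    and "homothet l1 x1 Z \<inter> homothet l2 x2 Z \<noteq> {}"
    and "l1 \<ge> l2"
  shows "\<exists>v. v extreme_point_of (homothet l2 x2 Z) \<and> v \<in> homothet l1 x1 Z"
proof -
  have P: "polytope Z" and CS: "\<forall>F. F face_of Z \<longrightarrow> centrally_symmetric F"
    and "centrally_symmetric Z" using assms(1) by (auto simp: zonotope_def)
  then obtain c where c: "\<And>x. x \<in> Z \<Longrightarrow> 2 *\<^sub>R c - x \<in> Z"
    unfolding centrally_symmetric_def by blast
  have cvx: "convex Z" using P polytope_imp_convex by blast
  obtain z1 z2 where z: "z1 \<in> Z" "z2 \<in> Z" "l1 *\<^sub>R z1 + x1 = l2 *\<^sub>R z2 + x2"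
    using assms(4) by (auto simp: homothet_def)
  define w where "w = (l1 / (l1 + l2)) *\<^sub>R (2 *\<^sub>R c - z1) + (l2 / (l1 + l2)) *\<^sub>R z2"
  have wZ: "w \<in> Z" unfolding w_def
    by (rule convexD[OF cvx c[OF z(1)] z(2)]) (use assms(2,3) in \<open>auto simp: add_divide_distrib[symmetric]\<close>)
  obtain v where v: "v extreme_point_of Z" "2 *\<^sub>R w - v \<in> Z"
    using key_aux[OF refl P CS wZ] by blast
  define q where "q = 2 *\<^sub>R w - v"
  define r where "r = l2 / l1"
  have r: "0 \<le> r" "r \<le> 1" "l1 * r = l2" using assms(2,3,5) by (auto simp: r_def)
  define u where "u = (1 - r) *\<^sub>R (2 *\<^sub>R c - w) + r *\<^sub>R (2 *\<^sub>R c - q)"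
  have uZ: "u \<in> Z" unfolding u_def
    by (rule convexD[OF cvx c[OF wZ] c[OF v(2)[folded q_def]]]) (use r in auto)
  have "(l1 + l2) *\<^sub>R w = l1 *\<^sub>R (2 *\<^sub>R c - z1) + l2 *\<^sub>R z2"
    using assms(2,3) by (simp add: w_def scaleR_add_right)
  then have W: "(l1 + l2) *\<^sub>R w = 2 *\<^sub>R l1 *\<^sub>R c - l1 *\<^sub>R z1 + l2 *\<^sub>R z2"
    by (simp add: algebra_simps)
  have "l1 *\<^sub>R u = (l1 - l1 * r) *\<^sub>R (2 *\<^sub>R c - w) + (l1 * r) *\<^sub>R (2 *\<^sub>R c - q)"
    by (simp add: u_def algebra_simps)
  also have "\<dots> = 2 *\<^sub>R l1 *\<^sub>R c - (l1 + l2) *\<^sub>R w + l2 *\<^sub>R v"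
    using r(3) by (simp add: q_def algebra_simps) (metis scaleR_2 scaleR_scaleR mult.commute)
  also have "\<dots> = l1 *\<^sub>R z1 - l2 *\<^sub>R z2 + l2 *\<^sub>R v"
    using W by simp
  finally have E: "l1 *\<^sub>R u = l1 *\<^sub>R z1 - l2 *\<^sub>R z2 + l2 *\<^sub>R v" .
  have X: "x2 = l1 *\<^sub>R z1 + x1 - l2 *\<^sub>R z2" using z(3) by (simp add: algebra_simps)
  have "l2 *\<^sub>R v + x2 = l1 *\<^sub>R u + x1"
    unfolding X E by (simp add: algebra_simps)
  then have "l2 *\<^sub>R v + x2 \<in> homothet l1 x1 Z" using uZ by (auto simp: homothet_def)
  then show ?thesis using extreme_homothet[OF assms(3) v(1)] by blast
qed

end
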